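(* Suppose every IDR of the system $\mathcal{I}(E,\mathcal{F}(E))$ is of Restricted Case II form, and let $E'\subseteq E$. Then for any two entities $e_i,e_j\in E$, $$PS(e_i\mid E')\cup PS(e_j\mid E') = PS(\{e_i,e_j\}\mid E').$$
   Context: A system $\mathcal{I}(E,\mathcal{F}(E))$ consists of a finite set $E$ of entities, $n=|E|$, and a set $\mathcal{F}(E)$ of interdependency relations (IDRs). Each entity $e$ has at most one IDR, of the form $e\leftarrow \sum_{i=1}^{m}\prod_{x\in s_i}x$ (a disjunction of conjunctions), where each minterm $s_i$ is a nonempty subset of $E$; it means $e$ is operational only if for at least one minterm all entities of that minterm are operational. Entities without an IDR can only fail initially. Failure dynamics: given an initially failing set $E'\subseteq E$ and a set $H\subseteq E$ of hardened entities (hardened entities never fail), put $F_0=E'\setminus H$ and $F_{t+1}=F_t\cup\{e\in E\setminus H: e \text{ has an IDR and every minterm of it contains an element of } F_t\}$; the final failed set is $F(E',H):=F_{n-1}$. $\mathrm{KillSet}(E'):=F(E',\emptyset)$. Protection set: for $H\subseteq E$, $PS(H\mid E'):=\mathrm{KillSet}(E')\setminus F(E',H)$ (the entities prevented from failing by hardening $H$); for a single entity, $PS(e\mid E'):=PS(\{e\}\mid E')$. Restricted Case II: every IDR has the form $e_i\leftarrow \sum_{q=1}^{p} e_q$ with $e_q\in E$ (a disjunction of minterms of size one). *)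

theory Defs
  imports Main
begin

text \<open>An interdependency system: a finite entity set E and a partial map idr assigning
  to an entity its IDR, given as the set of its minterms (each a nonempty subset of E).
  idr e = None means e has no IDR.\<close>

definition wf_system :: "'a set \<Rightarrow> ('a \<Rightarrow> 'a set set option) \<Rightarrow> bool" where
  "wf_system E idr \<longleftrightarrow> finite E \<and>
     (\<forall>e S. idr e = Some S \<longrightarrow> e \<in> E \<and> finite S \<and> S \<noteq> {} \<and>
        (\<forall>s\<in>S. s \<noteq> {} \<and> s \<subseteq> E))"

definition restricted_case_II :: "('a \<Rightarrow> 'a set set option) \<Rightarrow> bool" where
  "restricted_case_II idr \<longleftrightarrow> (\<forall>e S. idr e = Some S \<longrightarrow> (\<forall>s\<in>S. card s = 1))"

fun fail_step :: "'a set \<Rightarrow> ('a \<Rightarrow> 'a set set option) \<Rightarrow> 'a set \<Rightarrow> 'a set \<Rightarrow> nat \<Rightarrow> 'a set" where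
  "fail_step E idr E' H 0 = E' - H"
| "fail_step E idr E' H (Suc t) =
     fail_step E idr E' H t \<union>
     {e \<in> E - H. \<exists>S. idr e = Some S \<and> (\<forall>s\<in>S. s \<inter> fail_step E idr E' H t \<noteq> {})}"

definition final_failed :: "'a set \<Rightarrow> ('a \<Rightarrow> 'a set set option) \<Rightarrow> 'a set \<Rightarrow> 'a set \<Rightarrow> 'a set" where
  "final_failed E idr E' H = fail_step E idr E' H (card E - 1)"

definition kill_set :: "'a set \<Rightarrow> ('a \<Rightarrow> 'a set set option) \<Rightarrow> 'a set \<Rightarrow> 'a set" where
  "kill_set E idr E' = final_failed E idr E' {}"

definition protection_set :: "'a set \<Rightarrow> ('a \<Rightarrow> 'a set set option) \<Rightarrow> 'a set \<Rightarrow> 'a set \<Rightarrow> 'a set" where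
  "protection_set E idr H E' = kill_set E idr E' - final_failed E idr E' H"

end

theory Submission
  imports Defs
begin

lemma fs_mono_t: "fail_step E idr E' H t \<subseteq> fail_step E idr E' H (Suc t)"
  by auto

lemma fs_anti:
  assumes "H1 \<subseteq> H2"
  shows "fail_step E idr E' H2 t \<subseteq> fail_step E idr E' H1 t"
proof (induction t)
  case 0 then show ?case using assms by auto
next
  case (Suc t)
  show ?case
  proof
    fix x assume "x \<in> fail_step E idr E' H2 (Suc t)"
    then consider "x \<in> fail_step E idr E' H2 t"
      | S where "x \<in> E - H2" "idr x = Some S" "\<forall>s\<in>S. s \<inter> fail_step E idr E' H2 t \<noteq> {}"
      by auto
    then show "x \<in> fail_step E idr E' H1 (Suc t)"
    proof cases
      case 1 then show ?thesis using Suc by auto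
    next
      case (2 S)
      have "\<forall>s\<in>S. s \<inter> fail_step E idr E' H1 t \<noteq> {}" using 2(3) Suc by blast
      moreover have "x \<in> E - H1" using 2(1) assms by blast
      ultimately show ?thesis using 2(2) by auto
    qed
  qed
qed

lemma fs_char:
  "x \<in> fail_step E idr E' H t \<Longrightarrow> x \<in> E' - H \<or>
     (x \<in> E - H \<and> (\<exists>S. idr x = Some S \<and> (\<forall>s\<in>S. s \<inter> fail_step E idr E' H t \<noteq> {})))"
proof (induction t arbitrary: x)
  case 0 then show ?case by simp
next
  case (Suc t)
  have m: "fail_step E idr E' H t \<subseteq> fail_step E idr E' H (Suc t)" by (rule fs_mono_t)
  from Suc.prems consider "x \<in> fail_step E idr E' H t"
    | "x \<in> E - H" "\<exists>S. idr x = Some S \<and> (\<forall>s\<in>S. s \<inter> fail_step E idr E' H t \<noteq> {})"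
    by auto
  then show ?case
  proof cases
    case 1
    from Suc.IH[OF 1] show ?thesis
    proof
      assume "x \<in> E' - H" then show ?thesis by (rule disjI1)
    next
      assume h: "x \<in> E - H \<and> (\<exists>S. idr x = Some S \<and> (\<forall>s\<in>S. s \<inter> fail_step E idr E' H t \<noteq> {}))"
      then obtain S where S: "idr x = Some S" "\<forall>s\<in>S. s \<inter> fail_step E idr E' H t \<noteq> {}" by blast
      have "\<forall>s\<in>S. s \<inter> fail_step E idr E' H (Suc t) \<noteq> {}"
      proof
        fix s assume "s \<in> S"
        with S(2) have "s \<inter> fail_step E idr E' H t \<noteq> {}" by blast
        with m show "s \<inter> fail_step E idr E' H (Suc t) \<noteq> {}" by blast
      qed
      with h S(1) show ?thesis by blast
    qed
  next
    case 2
    then obtain S where S: "idr x = Some S" "\<forall>s\<in>S. s \<inter> fail_step E idr E' H t \<noteq> {}" by blast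
    have "\<forall>s\<in>S. s \<inter> fail_step E idr E' H (Suc t) \<noteq> {}"
    proof
      fix s assume "s \<in> S"
      with S(2) have "s \<inter> fail_step E idr E' H t \<noteq> {}" by blast
      with m show "s \<inter> fail_step E idr E' H (Suc t) \<noteq> {}" by blast
    qed
    with 2(1) S(1) show ?thesis by blast
  qed
qed

lemma single_int:
  assumes "card s = 1" "s \<inter> A \<noteq> {}" "s \<inter> B \<noteq> {}"
  shows "s \<inter> (A \<inter> B) \<noteq> {}"
  using assms by (auto simp: card_Suc_eq)

lemma fs_inter:
  assumes rc: "restricted_case_II idr"
  shows "fail_step E idr E' H1 t \<inter> fail_step E idr E' H2 t \<subseteq> fail_step E idr E' (H1 \<union> H2) t"
proof (induction t)
  case 0 then show ?case by auto
next
  case (Suc t)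
  show ?case
  proof
    fix x assume x: "x \<in> fail_step E idr E' H1 (Suc t) \<inter> fail_step E idr E' H2 (Suc t)"
    from x fs_char[of x E idr E' H1 "Suc t"] fs_char[of x E idr E' H2 "Suc t"]
    have c1: "x \<in> E' - H1 \<or> (x \<in> E - H1 \<and> (\<exists>S. idr x = Some S \<and> (\<forall>s\<in>S. s \<inter> fail_step E idr E' H1 (Suc t) \<noteq> {})))"
     and c2: "x \<in> E' - H2 \<or> (x \<in> E - H2 \<and> (\<exists>S. idr x = Some S \<and> (\<forall>s\<in>S. s \<inter> fail_step E idr E' H2 (Suc t) \<noteq> {})))"
      by auto
    show "x \<in> fail_step E idr E' (H1 \<union> H2) (Suc t)"
    proof (cases "x \<in> E'")
      case True
      with c1 c2 have "x \<in> E' - (H1 \<union> H2)" by auto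
      then have "x \<in> fail_step E idr E' (H1 \<union> H2) 0" by simp
      moreover have "fail_step E idr E' (H1 \<union> H2) 0 \<subseteq> fail_step E idr E' (H1 \<union> H2) (Suc t)"
      proof -
        have "\<And>k. fail_step E idr E' (H1 \<union> H2) 0 \<subseteq> fail_step E idr E' (H1 \<union> H2) k"
        proof -
          fix k show "fail_step E idr E' (H1 \<union> H2) 0 \<subseteq> fail_step E idr E' (H1 \<union> H2) k"
            by (induction k) auto
        qed
        then show ?thesis .
      qed
      ultimately show ?thesis by blast
    next
      case False
      with c1 c2 obtain S where S: "idr x = Some S" "x \<in> E - (H1 \<union> H2)"
        "\<forall>s\<in>S. s \<inter> fail_step E idr E' H1 (Suc t) \<noteq> {}"
        "\<forall>s\<in>S. s \<inter> fail_step E idr E' H2 (Suc t) \<noteq> {}" by auto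
      (* need supporters at time t: x not in E', x in F_{t+1} means supporters in F_t *)
      have t1: "\<forall>s\<in>S. s \<inter> fail_step E idr E' H1 t \<noteq> {}"
      proof -
        from x have "x \<in> fail_step E idr E' H1 (Suc t)" by blast
        then consider "x \<in> fail_step E idr E' H1 t"
          | "\<exists>S. idr x = Some S \<and> (\<forall>s\<in>S. s \<inter> fail_step E idr E' H1 t \<noteq> {})" by auto
        then show ?thesis
        proof cases
          case 1
          from fs_char[OF 1] False S(1) show ?thesis by auto
        next
          case 2 with S(1) show ?thesis by auto
        qed
      qed
      have t2: "\<forall>s\<in>S. s \<inter> fail_step E idr E' H2 t \<noteq> {}"
      proof -
        from x have "x \<in> fail_step E idr E' H2 (Suc t)" by blast
        then consider "x \<in> fail_step E idr E' H2 t"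
          | "\<exists>S. idr x = Some S \<and> (\<forall>s\<in>S. s \<inter> fail_step E idr E' H2 t \<noteq> {})" by auto
        then show ?thesis
        proof cases
          case 1
          from fs_char[OF 1] False S(1) show ?thesis by auto
        next
          case 2 with S(1) show ?thesis by auto
        qed
      qed
      have "\<forall>s\<in>S. s \<inter> fail_step E idr E' (H1 \<union> H2) t \<noteq> {}"
      proof
        fix s assume s: "s \<in> S"
        have "card s = 1" using rc S(1) s unfolding restricted_case_II_def by blast
        have "s \<inter> (fail_step E idr E' H1 t \<inter> fail_step E idr E' H2 t) \<noteq> {}"
          by (rule single_int[OF \<open>card s = 1\<close>]) (use t1 t2 s in auto)
        then show "s \<inter> fail_step E idr E' (H1 \<union> H2) t \<noteq> {}" using Suc.IH by blast
      qed
      with S have "x \<in> {e \<in> E - (H1 \<union> H2). \<exists>S. idr e = Some S \<and> (\<forall>s\<in>S. s \<inter> fail_step E idr E' (H1 \<union> H2) t \<noteq> {})}"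
        by blast
      then show ?thesis unfolding fail_step.simps(2) by (rule UnI2)
    qed
  qed
qed

theorem theorem4:
  fixes E :: "'a set" and idr :: "'a \<Rightarrow> 'a set set option" and E' :: "'a set"
    and ei ej :: 'a
  assumes "wf_system E idr"
    and "restricted_case_II idr"
    and "E' \<subseteq> E"
    and "ei \<in> E" and "ej \<in> E"
  shows "protection_set E idr {ei} E' \<union> protection_set E idr {ej} E'
           = protection_set E idr {ei, ej} E'"
proof -
  let ?n = "card E - 1"
  have a1: "fail_step E idr E' {ei, ej} ?n \<subseteq> fail_step E idr E' {ei} ?n"
    by (rule fs_anti) blast
  have a2: "fail_step E idr E' {ei, ej} ?n \<subseteq> fail_step E idr E' {ej} ?n"
    by (rule fs_anti) blast
  have eq: "{ei} \<union> {ej} = {ei, ej}" by blast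
  have i0: "fail_step E idr E' {ei} ?n \<inter> fail_step E idr E' {ej} ?n \<subseteq> fail_step E idr E' ({ei} \<union> {ej}) ?n"
    by (rule fs_inter[OF assms(2)])
  have i: "fail_step E idr E' {ei} ?n \<inter> fail_step E idr E' {ej} ?n \<subseteq> fail_step E idr E' {ei, ej} ?n"
    using i0 unfolding eq .
  show ?thesis
    unfolding protection_set_def final_failed_def using a1 a2 i by blast
qed

end
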